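(* ($I\Sigma_1$) Let $X\subseteq\mathbb{N}$ be finite, $\omega^{n+1}$-large and $\omega^3$-sparse, and let $c\in\mathbb{N}$ satisfy $4^{c^2}\le\min X$. Then: (1) for every finite $\bar X\subseteq\mathbb{N}$ with $|\bar X|\le c$ and $\max\bar X<\min X$, and every coloring $P:[\bar X\cup X]^2\to\{0,\dots,c-1\}$, there is an $\omega^n$-large $Y\subseteq X$ such that $P(x,y)=P(x,y')$ for all $x\in\bar X$ and $y,y'\in Y$; (2) for every finite $\bar X\subseteq\mathbb{N}$ with $|\bar X|\le c$ and $\max X<\min\bar X$, and every coloring $P:[X\cup\bar X]^2\to\{0,\dots,c-1\}$, there is an $\omega^n$-large $Y\subseteq X$ such that $P(y,x)=P(y',x)$ for all $x\in\bar X$ and $y,y'\in Y$.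
   Context: $\alpha$-largeness for $\alpha<\omega^\omega$: writing ordinals in Cantor normal form, $0[m]=0$, $(\beta+1)[m]=\beta$, $(\beta+\omega^n)[m]=\beta+\omega^{n-1}\cdot m$ for $n\ge1$; a finite $\{x_0<\dots<x_{\ell-1}\}$ is $\alpha$-large if $\alpha[x_0]\cdots[x_{\ell-1}]=0$. $X$ is \emph{$\alpha$-sparse} if $\min X>3$ and for all $x<y$ in $X$ the interval $[x,y)$ is $\alpha$-large. *)

theory Defs
  imports Main
begin

text \<open>Ordinals below omega^omega in Cantor normal form
  omega^e1 + ... + omega^ek, represented by the list [e1,...,ek] of exponents
  (nonincreasing). The empty list is 0.\<close>

type_synonym ord_cnf = "nat list"

definition omega_pow :: "nat \<Rightarrow> ord_cnf" where
  "omega_pow n = [n]"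

text \<open>Fundamental sequence: 0[m] = 0, (b+1)[m] = b,
  (b + omega^(n+1))[m] = b + omega^n * m.\<close>
fun fund :: "ord_cnf \<Rightarrow> nat \<Rightarrow> ord_cnf" where
  "fund a m = (if a = [] then [] else
     (case last a of 0 \<Rightarrow> butlast a
                | Suc k \<Rightarrow> butlast a @ replicate m k))"

definition large :: "ord_cnf \<Rightarrow> nat set \<Rightarrow> bool" where
  "large a X \<longleftrightarrow> finite X \<and> foldl fund a (sorted_list_of_set X) = []"

definition sparse :: "ord_cnf \<Rightarrow> nat set \<Rightarrow> bool" where
  "sparse a X \<longleftrightarrow> (\<forall>x\<in>X. 3 < x) \<and>
     (\<forall>x\<in>X. \<forall>y\<in>X. x < y \<longrightarrow> large a {x..<y})"

end

theory Submission
  imports Defs "HOL-Library.Multiset" "HOL-Library.FuncSet"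
begin


definition fm :: "nat multiset \<Rightarrow> nat \<Rightarrow> nat multiset" where
"fm M x = (if M = {#} then {#} else
   M - {#Min (set_mset M)#} + (if Min (set_mset M) = 0 then {#} else replicate_mset x (Min (set_mset M) - 1)))"

definition largeL :: "nat multiset \<Rightarrow> nat list \<Rightarrow> bool" where
"largeL M xs \<longleftrightarrow> foldl fm M xs = {#}"

lemma fm_empty[simp]: "fm {#} x = {#}" by (simp add: fm_def)
lemma foldl_fm_empty[simp]: "foldl fm {#} xs = {#}" by (induction xs) auto
lemma largeL_empty[simp]: "largeL {#} xs" by (simp add: largeL_def)
lemma largeL_Nil[simp]: "largeL M [] \<longleftrightarrow> M = {#}" by (simp add: largeL_def)
lemma largeL_Cons[simp]: "largeL M (x#xs) \<longleftrightarrow> largeL (fm M x) xs" by (simp add: largeL_def)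

definition mv :: "nat \<Rightarrow> nat multiset \<Rightarrow> nat multiset \<Rightarrow> bool" where
"mv m D G \<longleftrightarrow> (\<exists>g k. g \<in># G \<and> k \<le> m \<and> (k = 0 \<or> 0 < g) \<and> D = G - {#g#} + replicate_mset k (g - 1))"

definition cov :: "nat \<Rightarrow> nat multiset \<Rightarrow> nat multiset \<Rightarrow> bool" where
"cov m D G \<longleftrightarrow> (\<lambda>A B. mv m B A)\<^sup>*\<^sup>* G D"

lemma cov_refl[simp]: "cov m D D" by (simp add: cov_def)
lemma cov_trans: "cov m D E \<Longrightarrow> cov m E G \<Longrightarrow> cov m D G"
  unfolding cov_def by (meson rtranclp_trans)
lemma mv_cov: "mv m D G \<Longrightarrow> cov m D G"
  unfolding cov_def by auto
lemma mv_mono: "m \<le> m' \<Longrightarrow> mv m D G \<Longrightarrow> mv m' D G"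
  unfolding mv_def by (elim exE conjE) (rule exI, rule exI, erule conjI, (rule conjI, erule (1) order_trans), blast)
lemma cov_mono: "m \<le> m' \<Longrightarrow> cov m D G \<Longrightarrow> cov m' D G"
  unfolding cov_def by (metis (no_types, lifting) mv_mono rtranclp_mono predicate2I predicate2D)
lemma cov_emptyD: "cov m D {#} \<Longrightarrow> D = {#}"
  unfolding cov_def
proof (induction rule: rtranclp_induct)
  case base then show ?case by simp
next
  case (step y z) then show ?case by (auto simp: mv_def)
qed

lemma cov_sub_aux: "cov m D (D + E)"
proof (induction E)
  case empty then show ?case by simp
next
  case (add e E)
  have "mv m (D + E) (D + add_mset e E)"
    unfolding mv_def by (rule exI[of _ e], rule exI[of _ 0]) auto
  then show ?case using add cov_trans mv_cov by blast
qed

lemma cov_sub: "D \<subseteq># G \<Longrightarrow> cov m D G"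
  by (metis cov_sub_aux subset_mset.add_diff_inverse)

lemma mv_add: assumes "mv m D G" shows "mv m (D + M) (G + M)"
proof -
  obtain g k where g: "g \<in># G" "k \<le> m" "k = 0 \<or> 0 < g" and D: "D = G - {#g#} + replicate_mset k (g - 1)"
    using assms unfolding mv_def by blast
  have e: "M + G - {#g#} = M + (G - {#g#})" by (rule diff_union_single_conv[OF g(1)])
  have "D + M = G + M - {#g#} + replicate_mset k (g - 1)"
    unfolding D using e by (simp add: ac_simps)
  moreover have "g \<in># G + M" using g(1) by simp
  ultimately show ?thesis unfolding mv_def using g(2,3) by blast
qed

lemma cov_add: "cov m D G \<Longrightarrow> cov m (D + M) (G + M)"
  unfolding cov_def
proof (induction rule: rtranclp_induct)
  case base then show ?case by simp
next
  case (step y z) then show ?case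
    by (meson mv_add rtranclp.rtrancl_into_rtrancl)
qed

lemma cov_chain: "j \<le> i \<Longrightarrow> 1 \<le> m \<Longrightarrow> cov m {#j#} {#i#}"
proof (induction i)
  case 0 then show ?case by simp
next
  case (Suc i)
  show ?case
  proof (cases "j = Suc i")
    case True then show ?thesis by simp
  next
    case False
    then have "cov m {#j#} {#i#}" using Suc by simp
    moreover have "mv m {#i#} {#Suc i#}"
      unfolding mv_def using Suc.prems by (intro exI[of _ "Suc i"] exI[of _ 1]) auto
    ultimately show ?thesis using cov_trans mv_cov by blast
  qed
qed

lemma cov_fm_self: "cov x (fm D x) D"
proof (cases "D = {#}")
  case True then show ?thesis by simp
next
  case False
  define e where "e = Min (set_mset D)"
  have e: "e \<in># D" using False e_def by simp
  have "mv x (fm D x) D"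
    unfolding mv_def fm_def using False e
    by (intro exI[of _ e] exI[of _ "if e = 0 then 0 else x"]) (auto simp: e_def[symmetric])
  then show ?thesis by (rule mv_cov)
qed

lemma fm_nonempty: "G \<noteq> {#} \<Longrightarrow> fm G x = G - {#Min (set_mset G)#} +
   (if Min (set_mset G) = 0 then {#} else replicate_mset x (Min (set_mset G) - 1))"
  by (simp add: fm_def)

lemma Min_msetI: "e \<in># D \<Longrightarrow> (\<And>y. y \<in># D \<Longrightarrow> e \<le> y) \<Longrightarrow> Min (set_mset D) = e"
  by (intro Min_eqI) auto

lemma mv_step: assumes "mv m D G" "m \<le> x" shows "cov x (fm D x) (fm G x)"
proof -
  obtain g k where g: "g \<in># G" "k \<le> m" "k = 0 \<or> 0 < g" and D: "D = G - {#g#} + replicate_mset k (g - 1)"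
    using assms(1) unfolding mv_def by blast
  have G: "G \<noteq> {#}" using g by auto
  define e where "e = Min (set_mset G)"
  define R where "R = (if e = 0 then {#} else replicate_mset x (e - 1))"
  have e: "e \<in># G" using G e_def by simp
  have emin: "\<And>y. y \<in># G \<Longrightarrow> e \<le> y" using e_def by simp
  have fG: "fm G x = G - {#e#} + R" by (subst fm_nonempty[OF G]) (simp only: e_def R_def)
  show ?thesis
  proof (cases "k = 0")
    case True
    then have D0: "D = G - {#g#}" using D by simp
    show ?thesis
    proof (cases "e \<in># D")
      case True
      have DG: "D \<subseteq># G" using D0 by simp
      have "Min (set_mset D) = e"
        by (rule Min_msetI[OF True]) (meson DG emin mset_subset_eqD)
      then have "fm D x = D - {#e#} + R" using True by (auto simp: fm_def R_def)
      moreover have "D - {#e#} \<subseteq># G - {#e#}" using DG unfolding subseteq_mset_def by (simp add: diff_le_mono)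
      ultimately show ?thesis using fG cov_sub by (metis subset_mset.add_right_mono)
    next
      case False
      have "g = e"
      proof (rule ccontr)
        assume "g \<noteq> e"
        then have "e \<in># G - {#g#}" using e by (simp add: in_diff_count)
        then show False using False D0 by simp
      qed
      then have "D \<subseteq># fm G x" using D0 fG by simp
      then show ?thesis using cov_trans[OF cov_fm_self cov_sub] by blast
    qed
  next
    case False
    then have g0: "0 < g" using g by simp
    show ?thesis
    proof (cases "g = e")
      case True
      have "D \<subseteq># fm G x" using D fG True g0 g(2) assms(2)
        by (simp add: R_def replicate_mset_msubseteq_iff)
      then show ?thesis using cov_trans[OF cov_fm_self cov_sub] by blast
    next
      case ne: False
      have eD: "e \<in># G - {#g#}" using ne e by (simp add: in_diff_count)
      have gG: "g \<in># G - {#e#}" using ne g by (simp add: in_diff_count)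
      have "g \<ge> e" using emin g by simp
      then have ge: "g - 1 \<ge> e" using ne by simp
      have "Min (set_mset D) = e"
      proof (rule Min_msetI)
        show "e \<in># D" using D eD by simp
      next
        fix y assume "y \<in># D"
        then show "e \<le> y" using D ge emin by (auto dest: in_diffD split: if_splits)
      qed
      then have fD: "fm D x = D - {#e#} + R" using D eD by (auto simp: fm_def R_def)
      have eq: "fm D x = fm G x - {#g#} + replicate_mset k (g - 1)"
      proof -
        have 1: "G - {#g#} + replicate_mset k (g - 1) - {#e#} = replicate_mset k (g - 1) + (G - {#g#} - {#e#})"
          using eD by (metis add.commute diff_union_single_conv)
        have 2: "G - {#e#} + R - {#g#} = R + (G - {#e#} - {#g#})"
          using gG by (metis add.commute diff_union_single_conv)
        have 3: "G - {#g#} - {#e#} = G - {#e#} - {#g#}" by (simp add: diff_right_commute add_mset_commute)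
        show ?thesis apply (subst fD, subst fG, subst D) unfolding 1 2 3 by (simp add: ac_simps)
      qed
      have "mv x (fm D x) (fm G x)"
        unfolding mv_def using gG fG g(2) assms(2) g0 eq
        by (intro exI[of _ g] exI[of _ k]) auto
      then show ?thesis by (rule mv_cov)
    qed
  qed
qed


lemma cov_step: assumes "cov m D G" "m \<le> x" shows "cov x (fm D x) (fm G x)"
  using assms(1) unfolding cov_def[of m]
proof (induction rule: rtranclp_induct)
  case base then show ?case by simp
next
  case (step y z)
  then show ?case using mv_step[OF step(2) assms(2)] cov_trans by blast
qed

lemma cov_large: "cov m D G \<Longrightarrow> (\<forall>y\<in>set xs. m \<le> y) \<Longrightarrow> sorted xs \<Longrightarrow> largeL G xs \<Longrightarrow> largeL D xs"
proof (induction xs arbitrary: m D G)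
  case Nil then show ?case using cov_emptyD by simp
next
  case (Cons x xs)
  have "cov x (fm D x) (fm G x)" using cov_step Cons.prems by simp
  then show ?case using Cons by simp
qed

lemma Min_union_mset: "A \<noteq> {#} \<Longrightarrow> B \<noteq> {#} \<Longrightarrow> Min (set_mset (A + B)) = min (Min (set_mset A)) (Min (set_mset B))"
  by (simp add: Min_Un)

lemma fm_union_left: assumes "A \<noteq> {#}" "B \<noteq> {#}" "Min (set_mset A) \<le> Min (set_mset B)"
  shows "fm (A + B) x = fm A x + B"
proof -
  have m: "Min (set_mset (A + B)) = Min (set_mset A)"
    by (metis Min_union_mset[OF assms(1,2)] assms(3) min_absorb1)
  define a where "a = Min (set_mset A)"
  define R where "R = (if a = 0 then {#} else replicate_mset x (a - 1))"
  have a: "a \<in># A" using assms a_def by simp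
  have e1: "fm (A + B) x = A + B - {#Min (set_mset (A + B))#} + (if Min (set_mset (A + B)) = 0 then {#} else replicate_mset x (Min (set_mset (A + B)) - 1))"
    by (rule fm_nonempty) (use assms(1) in simp)
  have e1': "fm (A + B) x = A + B - {#a#} + R" using e1 unfolding m a_def[symmetric] R_def .
  have e2: "fm A x = A - {#a#} + R" unfolding R_def a_def by (rule fm_nonempty[OF assms(1)])
  have "A + B - {#a#} = A - {#a#} + B" using a
    by (metis diff_union_single_conv add.commute)
  then show ?thesis unfolding e1' e2 by (simp add: ac_simps)
qed

lemma fm_union_right: assumes "A \<noteq> {#}" "B \<noteq> {#}" "Min (set_mset B) < Min (set_mset A)"
  shows "fm (A + B) x = A + fm B x"
  using fm_union_left[OF assms(2) assms(1) less_imp_le[OF assms(3)], of x] by (simp add: add.commute)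

lemma cov_swap: assumes "A \<noteq> {#}" "B \<noteq> {#}" "Min (set_mset B) < Min (set_mset A)"
  shows "cov (Suc x) (fm A x + B) (A + fm B x)"
proof -
  define a where "a = Min (set_mset A)"
  define b where "b = Min (set_mset B)"
  have aA: "a \<in># A" and bB: "b \<in># B" using assms a_def b_def by auto
  have ab: "b < a" using assms a_def b_def by simp
  have "fm A x = A - {#a#} + (if a = 0 then {#} else replicate_mset x (a - 1))"
    unfolding a_def by (rule fm_nonempty[OF assms(1)])
  then have fA: "fm A x = A - {#a#} + replicate_mset x (a - 1)" using ab by simp
  have "fm B x = B - {#b#} + (if b = 0 then {#} else replicate_mset x (b - 1))"
    unfolding b_def by (rule fm_nonempty[OF assms(2)])
  then have fB: "B - {#b#} \<subseteq># fm B x" by simp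
  have S1: "cov (Suc x) (A + (B - {#b#})) (A + fm B x)"
    by (rule cov_sub) (use fB in simp)
  have "mv (Suc x) (A - {#a#} + replicate_mset (Suc x) (a - 1) + (B - {#b#})) (A + (B - {#b#}))"
    unfolding mv_def using aA ab
    by (intro exI[of _ a] exI[of _ "Suc x"]) (simp add: ac_simps)
  then have S2: "cov (Suc x) (add_mset (a - 1) (A - {#a#} + replicate_mset x (a - 1) + (B - {#b#}))) (A + (B - {#b#}))"
    by (simp add: mv_cov ac_simps)
  have "cov (Suc x) ({#b#} + (A - {#a#} + replicate_mset x (a - 1) + (B - {#b#})))
          ({#a - 1#} + (A - {#a#} + replicate_mset x (a - 1) + (B - {#b#})))"
    using cov_add[OF cov_chain[of b "a - 1" "Suc x"]] ab by simp
  then have S3: "cov (Suc x) (fm A x + B) (add_mset (a - 1) (A - {#a#} + replicate_mset x (a - 1) + (B - {#b#})))"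
    using bB fA by (simp add: ac_simps)
  show ?thesis using S1 S2 S3 cov_trans by blast
qed

lemma cov_head: assumes "A \<noteq> {#}" "B \<noteq> {#}" "m \<le> x" "cov m (A + B) G"
  shows "cov (Suc x) (fm A x + B) (fm G x)"
proof -
  have c: "cov x (fm (A + B) x) (fm G x)" using cov_step assms by blast
  show ?thesis
  proof (cases "Min (set_mset A) \<le> Min (set_mset B)")
    case True
    then show ?thesis using c fm_union_left[OF assms(1,2) True] cov_mono[of x "Suc x"] by simp
  next
    case False
    then have "cov x (A + fm B x) (fm G x)" using c fm_union_right[OF assms(1,2)] by simp
    then have "cov (Suc x) (A + fm B x) (fm G x)" using cov_mono[of x "Suc x"] by simp
    moreover have lt: "Min (set_mset B) < Min (set_mset A)" using False by simp
    ultimately show ?thesis using cov_trans[OF cov_swap[OF assms(1,2) lt]] by blast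
  qed
qed

lemma natsum: "sorted xs \<Longrightarrow> distinct xs \<Longrightarrow> (\<forall>y\<in>set xs. m \<le> y) \<Longrightarrow> cov m (A + B) G \<Longrightarrow> largeL G xs
  \<Longrightarrow> largeL A (filter P xs) \<or> largeL B (filter (\<lambda>y. \<not> P y) xs)"
proof (induction xs arbitrary: m A B G)
  case Nil
  then have "G = {#}" by simp
  then have "A + B = {#}" using cov_emptyD Nil.prems(4) by blast
  then show ?case by simp
next
  case (Cons x xs)
  show ?case
  proof (cases "A = {#}")
    case True then show ?thesis by simp
  next
    case A: False
    show ?thesis
    proof (cases "B = {#}")
      case True then show ?thesis by simp
    next
      case B: False
      have mx: "m \<le> x" using Cons.prems(3) by simp
      have xs1: "sorted xs" using Cons.prems(1) by simp
      have xs2: "distinct xs" using Cons.prems(2) by simp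
      have xs3: "\<forall>y\<in>set xs. Suc x \<le> y"
      proof
        fix y assume y: "y \<in> set xs"
        then have "x \<le> y" using Cons.prems(1) by simp
        moreover have "x \<noteq> y" using y Cons.prems(2) by auto
        ultimately show "Suc x \<le> y" by simp
      qed
      have lg: "largeL (fm G x) xs" using Cons.prems(5) by simp
      show ?thesis
      proof (cases "P x")
        case True
        have "cov (Suc x) (fm A x + B) (fm G x)" by (rule cov_head[OF A B mx Cons.prems(4)])
        from Cons.IH[OF xs1 xs2 xs3 this lg]
        have "largeL (fm A x) (filter P xs) \<or> largeL B (filter (\<lambda>y. \<not> P y) xs)" .
        then show ?thesis using True by simp
      next
        case nP: False
        have "cov m (B + A) G" using Cons.prems(4) by (simp add: add.commute)
        then have "cov (Suc x) (fm B x + A) (fm G x)" by (rule cov_head[OF B A mx])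
        then have "cov (Suc x) (A + fm B x) (fm G x)" by (simp add: add.commute)
        from Cons.IH[OF xs1 xs2 xs3 this lg]
        have "largeL A (filter P xs) \<or> largeL (fm B x) (filter (\<lambda>y. \<not> P y) xs)" .
        then show ?thesis using nP by simp
      qed
    qed
  qed
qed

lemma largeL_nonempty: "largeL M xs \<Longrightarrow> M \<noteq> {#} \<Longrightarrow> xs \<noteq> []"
  by (cases xs) auto

lemma pigeon: "sorted xs \<Longrightarrow> distinct xs \<Longrightarrow> largeL (replicate_mset (Suc K) n) xs
   \<Longrightarrow> card (f ` set xs) \<le> Suc K \<Longrightarrow> \<exists>s. largeL {#n#} (filter (\<lambda>y. f y = s) xs)"
proof (induction K arbitrary: xs)
  case 0
  have ne: "xs \<noteq> []" by (rule largeL_nonempty[OF 0(3)]) simp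
  have fin: "finite (f ` set xs)" by simp
  have c1: "card (f ` set xs) \<le> Suc 0" using 0(4) by simp
  have H: "\<forall>a\<in>f ` set xs. \<forall>b\<in>f ` set xs. a = b"
    by (rule iffD1[OF card_le_Suc0_iff_eq[OF fin] c1])
  have "\<forall>y\<in>set xs. f y = f (hd xs)" using H hd_in_set[OF ne] by blast
  then have "filter (\<lambda>y. f y = f (hd xs)) xs = xs" by (rule filter_True)
  then show ?case using 0(3) by (intro exI[of _ "f (hd xs)"]) simp
next
  case (Suc K)
  have ne: "xs \<noteq> []" by (rule largeL_nonempty[OF Suc.prems(3)]) simp
  define s0 where "s0 = f (hd xs)"
  have "cov 0 ({#n#} + replicate_mset (Suc K) n) (replicate_mset (Suc (Suc K)) n)" by simp
  then have "largeL {#n#} (filter (\<lambda>y. f y = s0) xs) \<or>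
        largeL (replicate_mset (Suc K) n) (filter (\<lambda>y. f y \<noteq> s0) xs)"
    using natsum[of xs 0 "{#n#}" "replicate_mset (Suc K) n" "replicate_mset (Suc (Suc K)) n" "\<lambda>y. f y = s0"] Suc.prems
    by simp
  then show ?case
  proof
    assume "largeL {#n#} (filter (\<lambda>y. f y = s0) xs)" then show ?thesis by blast
  next
    define ys where "ys = filter (\<lambda>y. f y \<noteq> s0) xs"
    assume l: "largeL (replicate_mset (Suc K) n) (filter (\<lambda>y. f y \<noteq> s0) xs)"
    have s0in: "s0 \<in> f ` set xs" using ne s0_def by simp
    have "f ` set ys \<subseteq> f ` set xs - {s0}" unfolding ys_def by auto
    then have "card (f ` set ys) \<le> card (f ` set xs - {s0})" by (simp add: card_mono)
    also have "\<dots> = card (f ` set xs) - 1" using s0in by simp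
    finally have "card (f ` set ys) \<le> Suc K" using Suc.prems by simp
    moreover have "sorted ys" unfolding ys_def by (rule sorted_wrt_filter[OF Suc.prems(1)])
    moreover have "distinct ys" unfolding ys_def by (rule distinct_filter[OF Suc.prems(2)])
    ultimately obtain s where s: "largeL {#n#} (filter (\<lambda>y. f y = s) ys)"
      using Suc.IH l ys_def by blast
    have "s \<noteq> s0"
    proof
      assume "s = s0"
      then have "filter (\<lambda>y. f y = s) ys = []" unfolding ys_def by (simp add: filter_filter)
      then show False using s by simp
    qed
    then have "filter (\<lambda>y. f y = s) ys = filter (\<lambda>y. f y = s) xs"
      unfolding ys_def by (simp add: filter_filter) (metis)
    then show ?thesis using s by auto
  qed
qed


lemma mset_bl: "xs \<noteq> [] \<Longrightarrow> mset xs = add_mset (last xs) (mset (butlast xs))"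
  by (induction xs) auto

lemma sorted_last_min: fixes a :: "nat list" assumes "sorted_wrt (\<ge>) a" "a \<noteq> []" "y \<in> set a" shows "last a \<le> y"
proof -
  have "sorted_wrt (\<ge>) (butlast a @ [last a])" using assms by simp
  then have "\<forall>u\<in>set (butlast a). last a \<le> u" by (simp add: sorted_wrt_append)
  moreover have "set a = insert (last a) (set (butlast a))"
    using arg_cong[OF mset_bl[OF assms(2)], of set_mset] by simp
  ultimately show ?thesis using assms(3) by auto
qed

lemma sorted_rep: "sorted_wrt (\<ge>) (replicate x (k::nat))"
  by (induction x) auto

lemma fund_mset: assumes "sorted_wrt (\<ge>) a"
  shows "sorted_wrt (\<ge>) (fund a x) \<and> mset (fund a x) = fm (mset a) x"
proof (cases "a = []")
  case True then show ?thesis by simp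
next
  case False
  have mn: "Min (set_mset (mset a)) = last a"
    using sorted_last_min[OF assms False] False by (intro Min_eqI) auto
  have mb: "mset a - {#last a#} = mset (butlast a)"
    unfolding mset_bl[OF False] by (rule add_mset_remove_trivial)
  have sa: "sorted_wrt (\<ge>) (butlast a @ [last a])" using assms False by simp
  have sb: "sorted_wrt (\<ge>) (butlast a)" using sa by (simp add: sorted_wrt_append)
  have lb: "\<forall>u\<in>set (butlast a). last a \<le> u" using sa by (simp add: sorted_wrt_append)
  have ma: "mset a \<noteq> {#}" using False by simp
  have fmA: "fm (mset a) x = mset (butlast a) + (if last a = 0 then {#} else replicate_mset x (last a - 1))"
    using fm_nonempty[OF ma, of x] unfolding mn mb .
  have fa: "fund a x = (case last a of 0 \<Rightarrow> butlast a | Suc k \<Rightarrow> butlast a @ replicate x k)"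
    by (subst fund.simps) (rule if_not_P[OF False])
  show ?thesis
  proof (cases "last a")
    case 0
    have f: "fund a x = butlast a" unfolding fa 0 by (simp only: nat.case)
    have "fm (mset a) x = mset (butlast a)" using fmA 0 by simp
    then show ?thesis unfolding f using sb by simp
  next
    case (Suc k)
    have f: "fund a x = butlast a @ replicate x k" unfolding fa Suc by (simp only: nat.case)
    have "fm (mset a) x = mset (butlast a) + replicate_mset x k" using fmA Suc by simp
    moreover have "sorted_wrt (\<ge>) (butlast a @ replicate x k)"
      using sb lb Suc sorted_rep by (auto simp: sorted_wrt_append)
    ultimately show ?thesis unfolding f by simp
  qed
qed

lemma foldl_fund: "sorted_wrt (\<ge>) a \<Longrightarrow> mset (foldl fund a xs) = foldl fm (mset a) xs"
proof (induction xs arbitrary: a)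
  case Nil then show ?case by simp
next
  case (Cons x xs)
  have "sorted_wrt (\<ge>) (fund a x)" "mset (fund a x) = fm (mset a) x" using fund_mset[OF Cons.prems] by auto
  then show ?case using Cons.IH by simp
qed

lemma large_iff: assumes "sorted_wrt (\<ge>) a"
  shows "large a X \<longleftrightarrow> finite X \<and> largeL (mset a) (sorted_list_of_set X)"
proof -
  have "foldl fund a (sorted_list_of_set X) = [] \<longleftrightarrow> mset (foldl fund a (sorted_list_of_set X)) = {#}"
    by simp
  then show ?thesis unfolding large_def largeL_def foldl_fund[OF assms] by simp
qed

lemma core:
  fixes g :: "nat \<Rightarrow> 'b"
  assumes X: "finite X" and L: "large (omega_pow (Suc n)) X" and C: "card (g ` X) \<le> Min X"
  shows "\<exists>Y \<subseteq> X. large (omega_pow n) Y \<and> (\<forall>y\<in>Y. \<forall>y'\<in>Y. g y = g y')"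
proof -
  have l: "largeL {#Suc n#} (sorted_list_of_set X)" using L large_iff[of "[Suc n]"] by (simp add: omega_pow_def)
  have Xne: "X \<noteq> {}"
  proof
    assume "X = {}" then show False using l by simp
  qed
  define x0 where "x0 = Min X"
  define xs where "xs = sorted_list_of_set (X - {x0})"
  have eq: "sorted_list_of_set X = x0 # xs" using sorted_list_of_set_nonempty[OF X Xne] x0_def xs_def by simp
  have "fm {#Suc n#} x0 = replicate_mset x0 n" by (simp add: fm_def)
  then have l2: "largeL (replicate_mset x0 n) xs" using l eq by simp
  have "card (g ` X) \<ge> 1" using X Xne by (simp add: Suc_le_eq card_gt_0_iff)
  then have x0pos: "x0 \<ge> 1" using C x0_def by simp
  have sx: "set xs = X - {x0}" "sorted xs" "distinct xs" using X xs_def by auto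
  have xsne: "xs \<noteq> []" by (rule largeL_nonempty[OF l2]) (use x0pos in simp)
  define K where "K = card (g ` set xs)"
  have "K \<ge> 1" using xsne unfolding K_def by (simp add: Suc_le_eq card_gt_0_iff)
  moreover have "K \<le> x0"
  proof -
    have "K \<le> card (g ` X)" unfolding K_def using X sx(1) by (intro card_mono) auto
    then show ?thesis using C x0_def by simp
  qed
  ultimately obtain K' where K': "K = Suc K'" "Suc K' \<le> x0" by (cases K) auto
  have "Suc K' \<le> count (replicate_mset x0 n) n" using K' by simp
  then have "replicate_mset (Suc K') n \<subseteq># replicate_mset x0 n"
    by (simp only: count_le_replicate_mset_subset_eq)
  then have "cov 0 (replicate_mset (Suc K') n) (replicate_mset x0 n)" by (rule cov_sub)
  then have lx: "largeL (replicate_mset (Suc K') n) xs" by (rule cov_large[OF _ _ sx(2) l2]) simp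
  have cx: "card (g ` set xs) \<le> Suc K'" using K'(1) unfolding K_def by simp
  obtain s where s: "largeL {#n#} (filter (\<lambda>y. g y = s) xs)"
    using pigeon[OF sx(2) sx(3) lx cx] by blast
  define ys where "ys = filter (\<lambda>y. g y = s) xs"
  have ys1: "sorted ys" unfolding ys_def by (rule sorted_wrt_filter[OF sx(2)])
  have ys2: "distinct ys" unfolding ys_def by (rule distinct_filter[OF sx(3)])
  note ys = ys1 ys2
  have sl: "sorted_list_of_set (set ys) = ys"
    using ys by (simp add: sorted_list_of_set_sort_remdups distinct_remdups_id sorted_sort_id)
  have s': "largeL {#n#} ys" using s unfolding ys_def .
  have li: "large [n] (set ys) \<longleftrightarrow> finite (set ys) \<and> largeL {#n#} (sorted_list_of_set (set ys))"
    using large_iff[of "[n]" "set ys"] by simp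
  have "large [n] (set ys)" unfolding li sl using s' finite_set by blast
  then have A1: "large (omega_pow n) (set ys)" unfolding omega_pow_def .
  have "set ys \<subseteq> set xs" unfolding ys_def by (rule filter_is_subset)
  moreover have "set xs \<subseteq> X" unfolding sx(1) by (rule Diff_subset)
  ultimately have A2: "set ys \<subseteq> X" by (rule order_trans)
  have A3: "\<forall>y\<in>set ys. \<forall>y'\<in>set ys. g y = g y'"
  proof (intro ballI)
    fix y y' assume "y \<in> set ys" "y' \<in> set ys"
    then have "g y = s" "g y' = s" unfolding ys_def set_filter by simp_all
    then show "g y = g y'" by (rule trans[OF _ sym])
  qed
  show ?thesis by (intro exI[of _ "set ys"] conjI A1 A2 A3)
qed

lemma pow_bound: fixes c :: nat assumes "k \<le> c" shows "c ^ k \<le> 4 ^ (c^2)"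
proof (cases "c = 0")
  case True then show ?thesis using assms by simp
next
  case False
  have "c ^ k \<le> c ^ c" using False assms by (simp add: power_increasing)
  also have "c \<le> 4 ^ c"
  proof -
    have "c < 2 ^ c" by (rule less_exp)
    also have "(2::nat) ^ c \<le> 4 ^ c" by (rule power_mono) auto
    finally show ?thesis by simp
  qed
  then have "c ^ c \<le> (4 ^ c) ^ c" by (rule power_mono) simp
  also have "\<dots> = 4 ^ (c^2)" by (simp add: power_mult[symmetric] power2_eq_square)
  finally show ?thesis .
qed

theorem mainTheorem17:
  fixes X :: "nat set" and n c :: nat
  assumes "finite X"
    and "large (omega_pow (n+1)) X"
    and "sparse (omega_pow 3) X"
    and "4 ^ (c^2) \<le> Min X"
  shows "(\<forall>Xb :: nat set. \<forall>P :: nat \<Rightarrow> nat \<Rightarrow> nat.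
            finite Xb \<and> card Xb \<le> c \<and> (\<forall>x\<in>Xb. \<forall>y\<in>X. x < y) \<and>
            (\<forall>x\<in>Xb \<union> X. \<forall>y\<in>Xb \<union> X. x < y \<longrightarrow> P x y < c)
            \<longrightarrow> (\<exists>Y. Y \<subseteq> X \<and> large (omega_pow n) Y \<and>
                   (\<forall>x\<in>Xb. \<forall>y\<in>Y. \<forall>y'\<in>Y. P x y = P x y')))
       \<and> (\<forall>Xb :: nat set. \<forall>P :: nat \<Rightarrow> nat \<Rightarrow> nat.
            finite Xb \<and> card Xb \<le> c \<and> (\<forall>x\<in>X. \<forall>y\<in>Xb. x < y) \<and>
            (\<forall>x\<in>X \<union> Xb. \<forall>y\<in>X \<union> Xb. x < y \<longrightarrow> P x y < c)
            \<longrightarrow> (\<exists>Y. Y \<subseteq> X \<and> large (omega_pow n) Y \<and>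
                   (\<forall>x\<in>Xb. \<forall>y\<in>Y. \<forall>y'\<in>Y. P y x = P y' x)))"
proof -
  have fin: "finite X" using assms(1) .
  have L: "large (omega_pow (Suc n)) X" using assms(2) by simp
  have M: "4 ^ (c^2) \<le> Min X" using assms(4) .
  have colors: "card (g ` X) \<le> Min X"
    if "finite Xb" "card Xb \<le> c" "\<And>y. y \<in> X \<Longrightarrow> g y \<in> (\<Pi>\<^sub>E x\<in>Xb. {..<c})" for g :: "nat \<Rightarrow> nat \<Rightarrow> nat" and Xb
  proof -
    have "g ` X \<subseteq> (\<Pi>\<^sub>E x\<in>Xb. {..<c})" using that(3) by auto
    then have "card (g ` X) \<le> card (\<Pi>\<^sub>E x\<in>Xb. {..<c})"
      by (intro card_mono finite_PiE that(1)) auto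
    also have "\<dots> = c ^ card Xb" using that(1) by (simp add: card_PiE)
    also have "\<dots> \<le> 4 ^ (c^2)" using pow_bound that(2) by blast
    finally show ?thesis using M by simp
  qed
  show ?thesis
  proof (intro conjI allI impI)
    fix Xb :: "nat set" and P :: "nat \<Rightarrow> nat \<Rightarrow> nat"
    assume H: "finite Xb \<and> card Xb \<le> c \<and> (\<forall>x\<in>Xb. \<forall>y\<in>X. x < y) \<and>
            (\<forall>x\<in>Xb \<union> X. \<forall>y\<in>Xb \<union> X. x < y \<longrightarrow> P x y < c)"
    define g where "g y = (\<lambda>x\<in>Xb. P x y)" for y
    have cg: "card (g ` X) \<le> Min X"
    proof (rule colors)
      show "finite Xb" "card Xb \<le> c" using H by auto
      fix y assume y: "y \<in> X"
      show "g y \<in> (\<Pi>\<^sub>E x\<in>Xb. {..<c})" unfolding g_def restrict_PiE_iff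
      proof
        fix x assume x: "x \<in> Xb"
        have lt: "x < y" using H x y by blast
        have "P x y < c" using H x y lt by blast
        then show "P x y \<in> {..<c}" by simp
      qed
    qed
    have EY: "\<exists>Y. Y \<subseteq> X \<and> large (omega_pow n) Y \<and> (\<forall>y\<in>Y. \<forall>y'\<in>Y. g y = g y')"
      using core[OF fin L cg] .
    then obtain Y where Y0: "Y \<subseteq> X \<and> large (omega_pow n) Y \<and> (\<forall>y\<in>Y. \<forall>y'\<in>Y. g y = g y')"
      by (rule exE)
    note Y = conjunct1[OF Y0] conjunct1[OF conjunct2[OF Y0]] conjunct2[OF conjunct2[OF Y0]]
    have "\<forall>x\<in>Xb. \<forall>y\<in>Y. \<forall>y'\<in>Y. P x y = P x y'"
    proof (intro ballI)
      fix x y y' assume "x \<in> Xb" "y \<in> Y" "y' \<in> Y"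
      then have "g y = g y'" using Y(3) by blast
      then have "g y x = g y' x" by (rule fun_cong)
      then show "P x y = P x y'" using \<open>x \<in> Xb\<close> unfolding g_def by simp
    qed
    then show "\<exists>Y. Y \<subseteq> X \<and> large (omega_pow n) Y \<and> (\<forall>x\<in>Xb. \<forall>y\<in>Y. \<forall>y'\<in>Y. P x y = P x y')"
      using Y by blast
  next
    fix Xb :: "nat set" and P :: "nat \<Rightarrow> nat \<Rightarrow> nat"
    assume H: "finite Xb \<and> card Xb \<le> c \<and> (\<forall>x\<in>X. \<forall>y\<in>Xb. x < y) \<and>
            (\<forall>x\<in>X \<union> Xb. \<forall>y\<in>X \<union> Xb. x < y \<longrightarrow> P x y < c)"
    define g where "g y = (\<lambda>x\<in>Xb. P y x)" for y
    have cg: "card (g ` X) \<le> Min X"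
    proof (rule colors)
      show "finite Xb" "card Xb \<le> c" using H by auto
      fix y assume y: "y \<in> X"
      show "g y \<in> (\<Pi>\<^sub>E x\<in>Xb. {..<c})" unfolding g_def restrict_PiE_iff
      proof
        fix x assume x: "x \<in> Xb"
        have lt: "y < x" using H x y by blast
        have "P y x < c" using H x y lt by blast
        then show "P y x \<in> {..<c}" by simp
      qed
    qed
    have EY: "\<exists>Y. Y \<subseteq> X \<and> large (omega_pow n) Y \<and> (\<forall>y\<in>Y. \<forall>y'\<in>Y. g y = g y')"
      using core[OF fin L cg] .
    then obtain Y where Y0: "Y \<subseteq> X \<and> large (omega_pow n) Y \<and> (\<forall>y\<in>Y. \<forall>y'\<in>Y. g y = g y')"
      by (rule exE)
    note Y = conjunct1[OF Y0] conjunct1[OF conjunct2[OF Y0]] conjunct2[OF conjunct2[OF Y0]]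
    have "\<forall>x\<in>Xb. \<forall>y\<in>Y. \<forall>y'\<in>Y. P y x = P y' x"
    proof (intro ballI)
      fix x y y' assume "x \<in> Xb" "y \<in> Y" "y' \<in> Y"
      then have "g y = g y'" using Y(3) by blast
      then have "g y x = g y' x" by (rule fun_cong)
      then show "P y x = P y' x" using \<open>x \<in> Xb\<close> unfolding g_def by simp
    qed
    then show "\<exists>Y. Y \<subseteq> X \<and> large (omega_pow n) Y \<and> (\<forall>x\<in>Xb. \<forall>y\<in>Y. \<forall>y'\<in>Y. P y x = P y' x)"
      using Y by blast
  qed
qed

end
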